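(* Let $x\in\mathbb{R}\setminus D$ with binary expansion $x=k+\sum_{n\ge1}a_n2^{-n}$ ($k\in\mathbb{Z}$, $a_n\in\{0,1\}$). Suppose $\liminf_n G_n'(x)$ and $\limsup_n G_n'(x)$ are finite and $$\limsup_n G_n'(x)-\liminf_n G_n'(x)\in\{1,2\}.$$ Then there exists $m\ge1$ such that $a_{m+2i}+a_{m+2i+1}=1$ for all $i\ge0$, and $$d_-T(x)=\liminf_n G_n'(x)+1,\qquad D^+T(x)=\limsup_n G_n'(x)-1.$$
   Context: Let $\phi(x)=\operatorname{dist}(x,\mathbb{Z})$ and $T(x)=\sum_{n=0}^\infty 2^{-n}\phi(2^nx)$ (the Takagi function). For $n\ge1$ let $D_n=\{k/2^{n-1}:k\in\mathbb{Z}\}$, $D=\bigcup_nD_n$, $g_n(x)=\operatorname{dist}(x,D_n)$, $G_n=g_1+\dots+g_n$; for $x\notin D$, $G_n'(x)$ exists and is an integer. Dini derivatives: $d_-f(x)=\liminf_{h\uparrow0}\frac{f(x+h)-f(x)}{h}$, $D^+f(x)=\limsup_{h\downarrow0}\frac{f(x+h)-f(x)}{h}$. *)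

theory Defs
  imports "HOL-Analysis.Analysis"
begin

definition phi :: "real \<Rightarrow> real" where
  "phi x = infdist x \<int>"

definition takagi :: "real \<Rightarrow> real" where
  "takagi x = (\<Sum>n. phi (2 ^ n * x) / 2 ^ n)"

definition Dset :: "nat \<Rightarrow> real set" where
  "Dset n = {of_int k / 2 ^ (n - 1) | k. True}"

definition Dall :: "real set" where
  "Dall = (\<Union>n\<in>{1..}. Dset n)"

definition gfun :: "nat \<Rightarrow> real \<Rightarrow> real" where
  "gfun n x = infdist x (Dset n)"

definition Gfun :: "nat \<Rightarrow> real \<Rightarrow> real" where
  "Gfun n x = (\<Sum>i=1..n. gfun i x)"

definition dini_lower_left :: "(real \<Rightarrow> real) \<Rightarrow> real \<Rightarrow> ereal" where
  "dini_lower_left f x = Liminf (at_left 0) (\<lambda>h. ereal ((f (x + h) - f x) / h))"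

definition dini_upper_right :: "(real \<Rightarrow> real) \<Rightarrow> real \<Rightarrow> ereal" where
  "dini_upper_right f x = Limsup (at_right 0) (\<lambda>h. ereal ((f (x + h) - f x) / h))"

end

theory Submission
  imports Defs
begin


definition mphi :: "real \<Rightarrow> real" where
  "mphi t = min (t - of_int \<lfloor>t\<rfloor>) (of_int \<lfloor>t\<rfloor> + 1 - t)"

lemma mphi_le_int: "mphi t \<le> \<bar>t - of_int k\<bar>"
proof (cases "k \<le> \<lfloor>t\<rfloor>")
  case True
  then have "of_int k \<le> (of_int \<lfloor>t\<rfloor>::real)" by simp
  then show ?thesis unfolding mphi_def using of_int_floor_le[of t] by linarith
next
  case False
  then have "of_int k \<ge> (of_int \<lfloor>t\<rfloor>::real) + 1" by linarith
  then show ?thesis unfolding mphi_def using real_of_int_floor_add_one_gt[of t] by linarith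
qed

lemma infdist_scaled:
  assumes c: "c > 0"
  shows "infdist y {of_int k / c | k. True} = mphi (c * y) / c"
proof (rule antisym)
  let ?A = "{of_int k / c | k::int. True}"
  have mem: "of_int k / c \<in> ?A" for k :: int by blast
  have d: "dist y (of_int k / c) = \<bar>c*y - of_int k\<bar> / c" for k :: int
  proof -
    have "y - of_int k / c = (c*y - of_int k)/c" using c by (simp add: field_simps)
    then show ?thesis using c by (simp add: dist_real_def abs_divide)
  qed
  have "infdist y ?A \<le> dist y (of_int \<lfloor>c*y\<rfloor> / c)" by (rule infdist_le[OF mem])
  moreover have "infdist y ?A \<le> dist y (of_int (\<lfloor>c*y\<rfloor>+1) / c)" by (rule infdist_le[OF mem])
  ultimately have "infdist y ?A \<le> (c*y - of_int \<lfloor>c*y\<rfloor>)/c"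
      "infdist y ?A \<le> (of_int \<lfloor>c*y\<rfloor> + 1 - c*y)/c"
    using of_int_floor_le[of "c*y"] real_of_int_floor_add_one_gt[of "c*y"] d[of "\<lfloor>c*y\<rfloor>"]
      d[of "\<lfloor>c*y\<rfloor>+1"] by auto
  then show "infdist y ?A \<le> mphi (c*y)/c" unfolding mphi_def
    using c by (simp add: min_def divide_right_mono)
  show "mphi (c*y)/c \<le> infdist y ?A"
  proof -
    have ne: "?A \<noteq> {}" by blast
    show "mphi (c*y)/c \<le> infdist y ?A" unfolding infdist_notempty[OF ne]
    proof (rule cINF_greatest)
      show "?A \<noteq> {}" by blast
      fix a assume "a \<in> ?A"
      then obtain k where "a = of_int k / c" by blast
      then show "mphi (c*y)/c \<le> dist y a" using mphi_le_int[of "c*y" k] c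
        by (simp add: d divide_right_mono)
    qed
  qed
qed

lemma phi_eq: "phi t = mphi t"
proof -
  have "(\<int>::real set) = {of_int k / 1 | k. True}" by (auto simp: Ints_def image_def)
  then show ?thesis unfolding phi_def using infdist_scaled[of 1 t] by simp
qed



lemma phi_half:
  assumes "of_int k \<le> 2*t" "2*t \<le> of_int k + 1"
  shows "phi t = (if even k then t - of_int k/2 else (of_int k+1)/2 - t)"
proof (cases "even k")
  case True
  then obtain p where k: "k = 2*p" by blast
  have "\<lfloor>t\<rfloor> = p" using assms unfolding k by (intro floor_unique) auto
  then show ?thesis using True assms unfolding phi_eq mphi_def k by auto
next
  case False
  then obtain p where k: "k = 2*p+1" by (meson oddE)
  show ?thesis
  proof (cases "t < of_int p + 1")
    case True
    have "\<lfloor>t\<rfloor> = p" using assms True unfolding k by (intro floor_unique) auto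
    then show ?thesis using False assms unfolding phi_eq mphi_def k by auto
  next
    case F: False
    have "\<lfloor>t\<rfloor> = p+1" using assms F unfolding k by (intro floor_unique) auto
    then show ?thesis using False assms F unfolding phi_eq mphi_def k by auto
  qed
qed

lemma phi_nonneg: "0 \<le> phi t"
  unfolding phi_eq mphi_def using of_int_floor_le[of t] real_of_int_floor_add_one_gt[of t] by linarith

lemma phi_le_half: "phi t \<le> 1/2"
  unfolding phi_eq mphi_def by linarith

lemma phi_shift: "phi (t + of_int k) = phi t"
proof -
  have "\<lfloor>t + of_int k\<rfloor> = \<lfloor>t\<rfloor> + k" by simp
  then show ?thesis unfolding phi_eq mphi_def by simp
qed

lemma phi_minus: "phi (- t) = phi t"
proof -
  have "\<lfloor>-t\<rfloor> = - \<lceil>t\<rceil>" by (rule floor_minus)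
  then show ?thesis unfolding phi_eq mphi_def ceiling_altdef[of t]
    by (auto split: if_splits)
qed

lemma takagi_summable: "summable (\<lambda>n. phi (2^n * y) / 2^n)"
proof (rule summable_comparison_test)
  show "summable (\<lambda>n. (1/2::real) * (1/2)^n)"
    by (intro summable_mult summable_geometric) simp
  show "\<exists>N. \<forall>n\<ge>N. norm (phi (2^n * y) / 2^n) \<le> 1/2 * (1/2::real)^n"
  proof (intro exI[of _ 0] allI impI)
    fix n :: nat
    have "phi (2^n * y) / 2^n \<le> (1/2) / 2^n" by (rule divide_right_mono[OF phi_le_half]) simp
    then show "norm (phi (2^n * y) / 2^n) \<le> 1/2 * (1/2::real)^n"
      using phi_nonneg[of "2^n*y"] by (simp add: power_divide)
  qed
qed

lemma takagi_sums: "(\<lambda>n. phi (2^n * y) / 2^n) sums takagi y"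
  unfolding takagi_def using takagi_summable by (rule summable_sums)

lemma takagi_nonneg: "0 \<le> takagi y"
  unfolding takagi_def by (intro suminf_nonneg takagi_summable) (simp add: phi_nonneg)

lemma takagi_unfold:
  "takagi y = (\<Sum>i<j. phi (2^i * y) / 2^i) + takagi (2^j * y) / 2^j"
proof -
  have "takagi y = (\<Sum>n. phi (2^(n+j) * y) / 2^(n+j)) + (\<Sum>i<j. phi (2^i * y) / 2^i)"
    unfolding takagi_def by (rule suminf_split_initial_segment[OF takagi_summable])
  moreover have "(\<Sum>n. phi (2^(n+j) * y) / 2^(n+j)) = takagi (2^j * y) / 2^j"
  proof -
    have "(\<lambda>n. phi (2^(n+j) * y) / 2^(n+j)) = (\<lambda>n. (phi (2^n * (2^j * y)) / 2^n) / 2^j)"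
      by (simp add: power_add mult.assoc)
    then show ?thesis unfolding takagi_def
      by (simp only:) (rule suminf_divide[OF takagi_summable])
  qed
  ultimately show ?thesis by simp
qed

lemma takagi_step: "takagi y = phi y + takagi (2 * y) / 2"
  using takagi_unfold[of y 1] by simp

lemma takagi_shift: "takagi (y + of_int k) = takagi y"
proof -
  have "phi (2^n * (y + of_int k)) = phi (2^n * y)" for n
  proof -
    have e: "2^n * (y + of_int k) = 2^n * y + of_int (2^n * k)" by (simp add: algebra_simps)
    show ?thesis by (simp only: e phi_shift)
  qed
  then show ?thesis unfolding takagi_def by simp
qed

lemma takagi_shift': "takagi (y - of_int k) = takagi y"
  using takagi_shift[of y "-k"] by simp

lemma takagi_minus: "takagi (- y) = takagi y"
  unfolding takagi_def using phi_minus[of "2^_ * y"] by simp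

definition eps :: "nat \<Rightarrow> real \<Rightarrow> int" where
  "eps i y = (if even \<lfloor>2^(Suc i) * y\<rfloor> then 1 else -1)"

definition wk :: "nat \<Rightarrow> real \<Rightarrow> int" where
  "wk n y = (\<Sum>i<n. eps i y)"

lemma floor2: fixes t :: real shows "\<lfloor>2*t\<rfloor> = 2*\<lfloor>t\<rfloor> \<or> \<lfloor>2*t\<rfloor> = 2*\<lfloor>t\<rfloor>+1"
proof -
  have a: "2*\<lfloor>t\<rfloor> \<le> \<lfloor>2*t\<rfloor>" using of_int_floor_le[of t] by (subst le_floor_iff) simp
  have b: "\<lfloor>2*t\<rfloor> \<le> 2*\<lfloor>t\<rfloor>+1"
    using real_of_int_floor_add_one_gt[of t] of_int_floor_le[of "2*t"] by (subst floor_le_iff) linarith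
  from a b show ?thesis by linarith
qed

lemma pair_le: "phi w + phi (2*w) / 2 \<le> 1/2"
  and pair_eq: "eps 0 w + eps 1 w = 0 \<Longrightarrow> phi w + phi (2*w) / 2 = 1/2"
proof -
  define k0 where "k0 = \<lfloor>2*w\<rfloor>"
  define k1 where "k1 = \<lfloor>2*(2*w)\<rfloor>"
  have h0: "of_int k0 \<le> 2*w" "2*w \<le> of_int k0 + 1" unfolding k0_def
    using of_int_floor_le of_int_floor_le[of "2*w"] real_of_int_floor_add_one_gt[of "2*w"] by linarith+
  have h1: "of_int k1 \<le> 2*(2*w)" "2*(2*w) \<le> of_int k1 + 1" unfolding k1_def
    using of_int_floor_le of_int_floor_le[of "2*(2*w)"] real_of_int_floor_add_one_gt[of "2*(2*w)"] by linarith+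
  have k: "k1 = 2*k0 \<or> k1 = 2*k0+1" unfolding k0_def k1_def by (rule floor2)
  have p0: "phi w = (if even k0 then w - of_int k0/2 else (of_int k0+1)/2 - w)" by (rule phi_half[OF h0])
  have p1: "phi (2*w) = (if even k1 then 2*w - of_int k1/2 else (of_int k1+1)/2 - 2*w)" by (rule phi_half[OF h1])
  have e: "eps 0 w = (if even k0 then 1 else -1)" "eps 1 w = (if even k1 then 1 else -1)"
    unfolding eps_def k0_def k1_def by (simp_all add: mult.assoc)
  have ev: "even k1 \<longleftrightarrow> k1 = 2*k0" using k by auto
  have "phi w + phi (2*w) / 2 \<le> 1/2 \<and> (even k0 \<noteq> even k1 \<longrightarrow> phi w + phi (2*w) / 2 = 1/2)"
  proof (cases "even k0")
    case True
    then show ?thesis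
    proof (cases "k1 = 2*k0")
      case True
      then show ?thesis using p0 p1 h0 h1 \<open>even k0\<close> ev by (auto simp: field_simps)
    next
      case False
      then have "k1 = 2*k0+1" using k by simp
      then show ?thesis using p0 p1 h0 h1 \<open>even k0\<close> ev by (auto simp: field_simps)
    qed
  next
    case odd: False
    then show ?thesis
    proof (cases "k1 = 2*k0")
      case True
      then show ?thesis using p0 p1 h0 h1 odd ev by (auto simp: field_simps)
    next
      case False
      then have "k1 = 2*k0+1" using k by simp
      then show ?thesis using p0 p1 h0 h1 odd ev by (auto simp: field_simps)
    qed
  qed
  then show "phi w + phi (2*w) / 2 \<le> 1/2" by simp
  show "phi w + phi (2*w) / 2 = 1/2" if "eps 0 w + eps 1 w = 0"
    using that e \<open>_ \<and> _\<close> by (auto split: if_splits)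
qed



lemma eps_shift: "eps j (2^n * x) = eps (n + j) x"
proof -
  have "(2::real)^(Suc j) * (2^n * x) = 2^(Suc (n+j)) * x" by (simp add: power_add mult_ac)
  then show ?thesis by (simp only: eps_def)
qed

lemma takagi_pairs:
  "(\<lambda>n. (phi (2^(2*n) * z) + phi (2 * (2^(2*n) * z)) / 2) * (1/4)^n) sums takagi z"
proof -
  have "(\<lambda>n. sum (\<lambda>i. phi (2^i * z) / 2^i) {n * 2 ..< n * 2 + 2}) sums takagi z"
    using sums_group[OF takagi_sums, of 2] by simp
  moreover have "sum (\<lambda>i. phi (2^i * z) / 2^i) {n * 2 ..< n * 2 + 2}
      = (phi (2^(2*n) * z) + phi (2 * (2^(2*n) * z)) / 2) * (1/4)^n" for n
  proof -
    have "{n * 2 ..< n * 2 + 2} = {2*n, 2*n+1}" by auto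
    moreover have "(2::real)^(2*n) = 4^n" by (simp add: power_mult)
    moreover have "(2::real)^(2*n+1) * z = 2 * (2^(2*n) * z)" by simp
    ultimately show ?thesis by (simp add: field_simps power_divide)
  qed
  ultimately show ?thesis by simp
qed

lemma geom23: "(\<lambda>n. (1/2::real) * (1/4)^n) sums (2/3)"
proof -
  have "(\<lambda>n. (1/4::real)^n) sums (1 / (1 - 1/4))" by (rule geometric_sums) simp
  from sums_mult[OF this, of "1/2"] show ?thesis by simp
qed

lemma takagi_le: "takagi z \<le> 2/3"
proof (rule sums_le[OF _ takagi_pairs geom23])
  fix n
  show "(phi (2^(2*n) * z) + phi (2 * (2^(2*n) * z)) / 2) * (1/4)^n \<le> 1/2 * (1/4::real)^n"
    by (rule mult_right_mono[OF pair_le]) simp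
qed

lemma takagi_good:
  assumes "\<forall>i. eps (2*i) z + eps (2*i+1) z = 0"
  shows "takagi z = 2/3"
proof -
  have "(phi (2^(2*n) * z) + phi (2 * (2^(2*n) * z)) / 2) = 1/2" for n
  proof (rule pair_eq)
    show "eps 0 (2^(2*n) * z) + eps 1 (2^(2*n) * z) = 0"
      using assms eps_shift[of 0 "2*n" z] eps_shift[of 1 "2*n" z] by simp
  qed
  note p = this
  have "(\<lambda>n. (phi (2^(2*n) * z) + phi (2 * (2^(2*n) * z)) / 2) * (1/4)^n) = (\<lambda>n. (1/2::real) * (1/4)^n)"
    by (rule ext) (simp only: p)
  then have "(\<lambda>n. (1/2::real) * (1/4)^n) sums takagi z" using takagi_pairs[of z] by simp
  then show ?thesis using geom23 sums_unique2 by blast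
qed

lemma takagi_le1: fixes t :: real assumes "0 \<le> t" "t \<le> 1" shows "takagi t \<le> t + 1/3"
proof (cases "t \<le> 1/2")
  case True
  have "phi t = t" using phi_half[of 0 t] True assms by simp
  then show ?thesis using takagi_step[of t] takagi_le[of "2*t"] by simp
next
  case False
  then show ?thesis using takagi_le[of t] by simp
qed

lemma takagi_third: "takagi (1/3) = 2/3"
proof -
  have a: "takagi (1/3) = 1/3 + takagi (2/3) / 2"
    using takagi_step[of "1/3"] phi_half[of 0 "1/3"] by simp
  have b: "takagi (2/3) = 1/3 + takagi (1/3) / 2"
  proof -
    have "takagi (2/3) = phi (2/3) + takagi (4/3) / 2" using takagi_step[of "2/3"] by simp
    moreover have "phi (2/3) = 1/3" using phi_half[of 1 "2/3"] by simp
    moreover have "takagi (4/3) = takagi (1/3)" using takagi_shift[of "1/3" 1] by simp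
    ultimately show ?thesis by simp
  qed
  from a b show ?thesis by linarith
qed



lemma nest:
  fixes x :: real
  assumes "j \<le> n"
  shows "of_int \<lfloor>2^j*x\<rfloor> / 2^j \<le> of_int \<lfloor>2^n*x\<rfloor> / (2^n::real)"
    and "(of_int \<lfloor>2^n*x\<rfloor> + 1) / 2^n \<le> (of_int \<lfloor>2^j*x\<rfloor> + 1) / (2^j::real)"
proof -
  define d where "d = n - j"
  have n: "(2::real)^n = 2^j * 2^d" using assms unfolding d_def by (simp add: power_add[symmetric])
  define q where "q = \<lfloor>2^j*x\<rfloor>"
  have q1: "of_int q \<le> 2^j*x" "2^j*x < of_int q + 1" unfolding q_def by linarith+
  have pd: "(0::real) < 2^d" by simp
  have a: "2^d * q \<le> \<lfloor>2^n*x\<rfloor>"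
  proof (subst le_floor_iff)
    have "(2::real)^d * of_int q \<le> 2^d * (2^j*x)" using q1 pd by (simp add: mult_left_mono)
    then show "real_of_int (2^d * q) \<le> 2^n * x" unfolding n by (simp add: mult_ac)
  qed
  have b: "\<lfloor>2^n*x\<rfloor> + 1 \<le> 2^d * (q+1)"
  proof -
    have m2: "(2::real)^d * (2^j*x) < 2^d * (of_int q + 1)" using q1 pd by simp
    have m1: "real_of_int \<lfloor>2^n*x\<rfloor> \<le> 2^d * (2^j*x)"
      using of_int_floor_le[of "2^n*x"] unfolding n by (simp add: mult_ac)
    have "real_of_int \<lfloor>2^n*x\<rfloor> < 2^d * (of_int q + 1)" by (rule le_less_trans[OF m1 m2])
    then have "real_of_int \<lfloor>2^n*x\<rfloor> < real_of_int (2^d * (q+1))" by simp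
    then show ?thesis by linarith
  qed
  have "of_int q / 2^j = real_of_int (2^d * q) / 2^n" unfolding n by simp
  also have "\<dots> \<le> of_int \<lfloor>2^n*x\<rfloor> / 2^n" using a by (intro divide_right_mono) (simp only: of_int_le_iff, simp)
  finally show "of_int \<lfloor>2^j*x\<rfloor> / 2^j \<le> of_int \<lfloor>2^n*x\<rfloor> / (2^n::real)" unfolding q_def .
  have "(of_int \<lfloor>2^n*x\<rfloor> + 1) / 2^n = real_of_int (\<lfloor>2^n*x\<rfloor> + 1) / 2^n" by simp
  also have "\<dots> \<le> real_of_int (2^d * (q+1)) / 2^n" using b by (intro divide_right_mono) (simp only: of_int_le_iff, simp)
  also have "\<dots> = (of_int q + 1) / 2^j" unfolding n by simp
  finally show "(of_int \<lfloor>2^n*x\<rfloor> + 1) / 2^n \<le> (of_int \<lfloor>2^j*x\<rfloor> + 1) / (2^j::real)" unfolding q_def .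
qed

lemma lin_term:
  fixes x y :: real
  assumes "i < n" "of_int \<lfloor>2^n*x\<rfloor> / 2^n \<le> y" "y \<le> (of_int \<lfloor>2^n*x\<rfloor> + 1) / 2^n"
  shows "phi (2^i*y)/2^i - phi (2^i*x)/2^i = of_int (eps i x) * (y - x)"
proof -
  define k where "k = \<lfloor>2^(Suc i)*x\<rfloor>"
  have n1: "of_int k / 2^(Suc i) \<le> y" "y \<le> (of_int k + 1) / 2^(Suc i)"
    using nest[of "Suc i" n x] assms unfolding k_def by linarith+
  have pi: "(0::real) < 2^(Suc i)" by simp
  have hy: "of_int k \<le> 2*(2^i*y)" "2*(2^i*y) \<le> of_int k + 1"
    using n1 pi by (simp_all add: field_simps)
  have hx: "of_int k \<le> 2*(2^i*x)" "2*(2^i*x) \<le> of_int k + 1"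
    unfolding k_def using of_int_floor_le[of "2^(Suc i)*x"] real_of_int_floor_add_one_gt[of "2^(Suc i)*x"]
    by (simp_all add: mult.assoc)
  have e: "eps i x = (if even k then 1 else -1)" unfolding eps_def k_def by simp
  show ?thesis using phi_half[OF hy] phi_half[OF hx] e by (simp add: field_simps)
qed

lemma lin_sum:
  fixes x y :: real
  assumes "of_int \<lfloor>2^n*x\<rfloor> / 2^n \<le> y" "y \<le> (of_int \<lfloor>2^n*x\<rfloor> + 1) / 2^n"
  shows "(\<Sum>i<n. phi (2^i*y)/2^i) - (\<Sum>i<n. phi (2^i*x)/2^i) = of_int (wk n x) * (y - x)"
proof -
  have "(\<Sum>i<n. phi (2^i*y)/2^i) - (\<Sum>i<n. phi (2^i*x)/2^i) = (\<Sum>i<n. phi (2^i*y)/2^i - phi (2^i*x)/2^i)"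
    by (simp add: sum_subtractf)
  also have "\<dots> = (\<Sum>i<n. of_int (eps i x) * (y - x))"
    by (rule sum.cong[OF refl]) (use lin_term assms in auto)
  also have "\<dots> = of_int (wk n x) * (y - x)" unfolding wk_def by (simp add: sum_distrib_right)
  finally show ?thesis .
qed

lemma takagi_local:
  fixes x y :: real
  assumes "of_int \<lfloor>2^n*x\<rfloor> / 2^n \<le> y" "y \<le> (of_int \<lfloor>2^n*x\<rfloor> + 1) / 2^n"
  shows "takagi y - takagi x = of_int (wk n x) * (y - x) + (takagi (2^n*y) - takagi (2^n*x)) / 2^n"
  using lin_sum[OF assms] takagi_unfold[of y n] takagi_unfold[of x n] by (simp add: diff_divide_distrib)

lemma wk_Suc: "wk (Suc n) x = wk n x + eps n x"
  unfolding wk_def by simp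

lemma eps_cases: "eps i x = 1 \<or> eps i x = -1"
  unfolding eps_def by simp

lemma eps_floor: "eps n x = 1 \<longleftrightarrow> \<lfloor>2^(Suc n)*x\<rfloor> = 2*\<lfloor>2^n*x\<rfloor>"
proof -
  have e: "(2::real)^(Suc n)*x = 2*(2^n*x)" by simp
  show ?thesis using floor2[of "2^n*x"] unfolding eps_def e by auto
qed

lemma floor_Suc_cases: "\<lfloor>2^(Suc n)*x\<rfloor> = 2*\<lfloor>2^n*x\<rfloor> \<or> \<lfloor>2^(Suc n)*x\<rfloor> = 2*\<lfloor>2^n*(x::real)\<rfloor> + 1"
proof -
  have e: "(2::real)^(Suc n)*x = 2*(2^n*x)" by simp
  show ?thesis using floor2[of "2^n*x"] unfolding e .
qed

lemma takagi_good_at: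
  assumes "\<forall>i. eps (m+2*i) x + eps (m+2*i+1) x = 0"
  shows "takagi (2^m * x) = 2/3"
proof (rule takagi_good, intro allI)
  fix i
  show "eps (2*i) (2^m*x) + eps (2*i+1) (2^m*x) = 0"
    using assms eps_shift[of "2*i" m x] eps_shift[of "2*i+1" m x] by (simp add: add.assoc)
qed



lemma decomp:
  fixes x y :: real and n :: nat
  defines "p \<equiv> \<lfloor>2^n*x\<rfloor>"
  assumes q: "\<lfloor>2^(Suc n)*x\<rfloor> = 2*p"
    and y1: "(2* of_int p + 1)/2^(Suc n) \<le> y" and y2: "y \<le> (of_int p + 1)/2^n"
  shows "2^(Suc n)*(takagi y - takagi x) = (of_int (wk n x) + 1)*(1 - (2^(Suc n)*x - 2* of_int p))
     + (of_int (wk n x) - 1)*(2^(Suc n)*y - 2* of_int p - 1)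
     + takagi (2^(Suc n)*y - 2* of_int p - 1) - takagi (2^(Suc n)*x)"
proof -
  define X where "X = 2^n*x"
  define Y where "Y = 2^n*y"
  define w where "w = (of_int (wk n x) :: real)"
  define B where "B = 2*Y - 2* of_int p - 1"
  have pn: "(0::real) < 2^n" by simp
  have e2x: "(2::real)^(Suc n)*x = 2*X" and e2y: "(2::real)^(Suc n)*y = 2*Y" unfolding X_def Y_def by simp_all
  have qx: "2* of_int p \<le> 2*X" "2*X < 2* of_int p + 1"
    using q of_int_floor_le[of "2^(Suc n)*x"] real_of_int_floor_add_one_gt[of "2^(Suc n)*x"] unfolding e2x
    by simp_all
  have yb: "2* of_int p + 1 \<le> 2*Y" "Y \<le> of_int p + 1"
    using y1 y2 pn unfolding Y_def by (simp_all add: field_simps)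
  have yl: "of_int \<lfloor>2^n*x\<rfloor> / 2^n \<le> y"
    using yb pn unfolding Y_def p_def by (simp add: field_simps)
  have loc: "takagi y - takagi x = w * (y - x) + (takagi Y - takagi X) / 2^n"
    using takagi_local[OF yl y2[unfolded p_def]] unfolding w_def X_def Y_def .
  have TX: "takagi X = (X - of_int p) + takagi (2*X) / 2"
  proof -
    have "takagi X = takagi (X - of_int p)" by (simp add: takagi_shift')
    also have "\<dots> = phi (X - of_int p) + takagi (2*(X - of_int p)) / 2" by (rule takagi_step)
    also have "phi (X - of_int p) = X - of_int p" using phi_half[of 0 "X - of_int p"] qx by simp
    also have "takagi (2*(X - of_int p)) = takagi (2*X)"
      using takagi_shift'[of "2*X" "2*p"] by (simp add: algebra_simps)
    finally show ?thesis .
  qed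
  have TY: "takagi Y = (1 - (Y - of_int p)) + takagi B / 2"
  proof -
    have "takagi Y = takagi (Y - of_int p)" by (simp add: takagi_shift')
    also have "\<dots> = phi (Y - of_int p) + takagi (2*(Y - of_int p)) / 2" by (rule takagi_step)
    also have "phi (Y - of_int p) = 1 - (Y - of_int p)" using phi_half[of 1 "Y - of_int p"] yb by simp
    also have "takagi (2*(Y - of_int p)) = takagi B"
      using takagi_shift[of B 1] unfolding B_def by (simp add: algebra_simps)
    finally show ?thesis .
  qed
  have "2^(Suc n)*(takagi y - takagi x) = 2*(w*(Y - X)) + 2*(takagi Y - takagi X)"
    unfolding loc X_def Y_def using pn by (simp add: field_simps)
  also have "\<dots> = (w + 1)*(1 - (2*X - 2* of_int p)) + (w - 1)*B + takagi B - takagi (2*X)"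
    unfolding TX TY B_def by (simp add: algebra_simps)
  finally show ?thesis unfolding e2x e2y B_def w_def .
qed

lemma Tz:
  fixes x :: real and n :: nat
  defines "p \<equiv> \<lfloor>2^n*x\<rfloor>"
  assumes q: "\<lfloor>2^(Suc n)*x\<rfloor> = 2*p"
    and e: "eps (Suc n) x = -1"
    and g: "\<forall>i. eps (Suc (Suc n)+2*i) x + eps (Suc (Suc n)+2*i+1) x = 0"
  shows "takagi (2^(Suc n)*x) = 1 - (2^(Suc n)*x - 2* of_int p) + 1/3"
proof -
  define z where "z = 2^(Suc n)*x"
  have T2: "takagi (2*z) = 2/3"
    using takagi_good_at[OF g] unfolding z_def by (simp add: mult.assoc)
  define k where "k = \<lfloor>2*z\<rfloor>"
  have ko: "odd k" using e unfolding eps_def k_def z_def by (simp add: mult.assoc split: if_splits)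
  have kc: "k = 2*\<lfloor>z\<rfloor> \<or> k = 2*\<lfloor>z\<rfloor> + 1" unfolding k_def by (rule floor2)
  have k: "k = 4*p + 1" using ko kc q unfolding z_def by auto
  have hz: "of_int k \<le> 2*z" "2*z \<le> of_int k + 1" unfolding k_def
    using of_int_floor_le[of "2*z"] real_of_int_floor_add_one_gt[of "2*z"] by linarith+
  have "phi z = (of_int k + 1)/2 - z" using phi_half[OF hz] ko by simp
  then have "phi z = 1 - (z - 2* of_int p)" unfolding k by simp
  then show ?thesis using takagi_step[of z] T2 unfolding z_def by simp
qed



lemma transition:
  assumes "P (N::nat)" "\<not> P J" "N \<le> J"
  shows "\<exists>n\<ge>N. P n \<and> \<not> P (Suc n)"
  using assms
proof (induction J)
  case 0
  then show ?case by simp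
next
  case (Suc J)
  show ?case
  proof (cases "P J")
    case True
    have "N \<le> J" using Suc.prems True by (metis le_SucE)
    then show ?thesis using True Suc.prems by blast
  next
    case False
    have "N \<le> J" using Suc.prems by (metis le_SucE)
    then show ?thesis using Suc.IH Suc.prems False by blast
  qed
qed

lemma small_pow: assumes "0 < (h::real)" shows "\<exists>J\<ge>N. 1/2^J < h"
proof -
  obtain J0 where J0: "(1/2::real)^J0 < h" using real_arch_pow_inv[OF assms, of "1/2"] by auto
  define J where "J = max J0 N"
  have "(1/2::real)^J \<le> (1/2)^J0" unfolding J_def by (rule power_decreasing) auto
  then have "1/(2::real)^J < h" using J0 by (simp add: power_one_over)
  then show ?thesis unfolding J_def by (intro exI[of _ "max J0 N"]) auto
qed

lemma upper:
  fixes x :: real and U :: int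
  assumes band: "\<forall>n\<ge>N0. U - 2 \<le> wk n x \<and> wk n x \<le> U"
    and goodH: "\<forall>n\<ge>N0. wk n x = U - 1 \<longrightarrow> (\<forall>i. eps (n+2*i) x + eps (n+2*i+1) x = 0)"
  shows "\<exists>\<delta>>0. \<forall>h. 0 < h \<and> h < \<delta> \<longrightarrow> takagi (x+h) - takagi x \<le> of_int (U-1) * h"
proof -
  define r where "r j = (of_int \<lfloor>2^j*x\<rfloor> + 1) / (2::real)^j" for j
  have rx: "x < r j" for j
  proof -
    have "2^j*x < of_int \<lfloor>2^j*x\<rfloor> + 1" by linarith
    then show ?thesis unfolding r_def by (simp add: field_simps)
  qed
  have rx2: "r j \<le> x + 1/2^j" for j
  proof -
    have "of_int \<lfloor>2^j*x\<rfloor> \<le> 2^j*x" by linarith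
    then show ?thesis unfolding r_def by (simp add: field_simps)
  qed
  show ?thesis
  proof (intro exI[of _ "r N0 - x"] conjI allI impI)
    show "0 < r N0 - x" using rx by simp
    fix h assume h: "0 < h \<and> h < r N0 - x"
    define P where "P j = (x + h \<le> r j)" for j
    have PN: "P N0" using h unfolding P_def by simp
    obtain J where J: "J \<ge> N0" "1/2^J < h" using small_pow h by blast
    have PJ: "\<not> P J" using rx2[of J] J unfolding P_def by simp
    obtain n where n: "n \<ge> N0" "P n" "\<not> P (Suc n)" using transition[OF PN PJ J(1)] by blast
    define p where "p = \<lfloor>2^n*x\<rfloor>"
    have q: "\<lfloor>2^(Suc n)*x\<rfloor> = 2*p"
    proof (rule ccontr)
      assume "\<lfloor>2^(Suc n)*x\<rfloor> \<noteq> 2*p"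
      then have "\<lfloor>2^(Suc n)*x\<rfloor> = 2*p+1" using floor_Suc_cases[of n x] unfolding p_def by auto
      then have "r (Suc n) = r n" unfolding r_def p_def by (simp add: field_simps)
      then show False using n unfolding P_def by simp
    qed
    have en: "eps n x = 1" using eps_floor q unfolding p_def by simp
    have y2: "x + h \<le> (of_int p + 1)/2^n" using n(2) unfolding P_def r_def p_def .
    have y1: "(2 * of_int p + 1)/2^(Suc n) \<le> x + h" using n(3) q unfolding P_def r_def by simp
    define A where "A = 1 - (2^(Suc n)*x - 2 * of_int p)"
    define B where "B = 2^(Suc n)*(x+h) - 2 * of_int p - 1"
    have dec: "2^(Suc n)*(takagi (x+h) - takagi x) = (of_int (wk n x) + 1)*A + (of_int (wk n x) - 1)*B
        + takagi B - takagi (2^(Suc n)*x)"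
      using decomp[OF q[unfolded p_def] y1[unfolded p_def] y2[unfolded p_def]] unfolding A_def B_def p_def .
    have pn: "(0::real) < 2^(Suc n)" by simp
    have B0: "0 \<le> B" "B \<le> 1" using y1 y2 pn unfolding B_def by (simp_all add: field_simps)
    have AB: "A + B = 2^(Suc n) * h" unfolding A_def B_def by (simp add: algebra_simps)
    have wS: "wk (Suc n) x = wk n x + 1" using wk_Suc en by simp
    have bn: "U - 2 \<le> wk n x" "wk (Suc n) x \<le> U" using band n(1) by auto
    have "2^(Suc n)*(takagi (x+h) - takagi x) \<le> of_int (U-1) * (A + B)"
    proof (cases "wk n x = U - 1")
      case True
      have wS': "wk (Suc n) x = U" using wS True by simp
      have "wk (Suc (Suc n)) x \<le> U" using band n(1) by auto
      then have e1: "eps (Suc n) x = -1" using wk_Suc[of "Suc n" x] wS' eps_cases[of "Suc n" x] by auto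
      have "wk (Suc (Suc n)) x = U - 1" using wk_Suc[of "Suc n" x] wS' e1 by simp
      then have g: "\<forall>i. eps (Suc (Suc n)+2*i) x + eps (Suc (Suc n)+2*i+1) x = 0"
        using goodH[rule_format, of "Suc (Suc n)"] n(1) by simp
      have tz: "takagi (2^(Suc n)*x) = A + 1/3"
        using Tz[OF q[unfolded p_def] e1 g] unfolding A_def p_def by simp
      have "takagi B \<le> B + 1/3" using takagi_le1 B0 by simp
      then show ?thesis using dec tz True by (simp add: algebra_simps)
    next
      case False
      then have w2: "wk n x = U - 2" using bn wS by simp
      then have "wk (Suc n) x = U - 1" using wS by simp
      then have g: "\<forall>i. eps (Suc n+2*i) x + eps (Suc n+2*i+1) x = 0"
        using goodH[rule_format, of "Suc n"] n(1) by simp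
      have tz: "takagi (2^(Suc n)*x) = 2/3" using takagi_good_at[OF g] .
      have "takagi B \<le> 2/3" by (rule takagi_le)
      then show ?thesis using dec tz w2 B0 by (simp add: algebra_simps)
    qed
    then have "2^(Suc n)*(takagi (x+h) - takagi x) \<le> 2^(Suc n) * (of_int (U-1) * h)"
      unfolding AB by (simp add: mult_ac)
    then show "takagi (x+h) - takagi x \<le> of_int (U-1) * h" using pn by simp
  qed
qed

lemma lower:
  fixes x :: real and U :: int
  assumes band: "\<forall>n\<ge>N0. U - 2 \<le> wk n x \<and> wk n x \<le> U"
    and goodH: "\<forall>n\<ge>N0. wk n x = U - 1 \<longrightarrow> (\<forall>i. eps (n+2*i) x + eps (n+2*i+1) x = 0)"
    and freq: "\<forall>N. \<exists>n\<ge>N. wk n x = U"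
  shows "\<forall>\<delta>>0. \<exists>h. 0 < h \<and> h < \<delta> \<and> takagi (x+h) - takagi x = of_int (U-1) * h"
proof (intro allI impI)
  fix \<delta> :: real assume d: "0 < \<delta>"
  obtain J where J: "1/2^J < \<delta>" using small_pow[OF d] by blast
  obtain n' where n': "n' \<ge> Suc (N0 + J)" "wk n' x = U" using freq by blast
  define n where "n = n' - 1"
  have nn: "n' = Suc n" "n \<ge> N0" "n \<ge> J" using n'(1) unfolding n_def by auto
  have wS: "wk (Suc n) x = U" using n' nn by simp
  have "wk n x \<le> U" using band nn by auto
  then have en: "eps n x = 1" using wk_Suc[of n x] wS eps_cases[of n x] by auto
  have wn: "wk n x = U - 1" using wk_Suc[of n x] wS en by simp
  define p where "p = \<lfloor>2^n*x\<rfloor>"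
  have q: "\<lfloor>2^(Suc n)*x\<rfloor> = 2*p" using eps_floor en unfolding p_def by simp
  have "wk (Suc (Suc n)) x \<le> U" using band nn by auto
  then have e1: "eps (Suc n) x = -1" using wk_Suc[of "Suc n" x] wS eps_cases[of "Suc n" x] by auto
  have "wk (Suc (Suc n)) x = U - 1" using wk_Suc[of "Suc n" x] wS e1 by simp
  then have g: "\<forall>i. eps (Suc (Suc n)+2*i) x + eps (Suc (Suc n)+2*i+1) x = 0"
    using goodH[rule_format, of "Suc (Suc n)"] nn by simp
  define A where "A = 1 - (2^(Suc n)*x - 2 * of_int p)"
  have tz: "takagi (2^(Suc n)*x) = A + 1/3"
    using Tz[OF q[unfolded p_def] e1 g] unfolding A_def p_def by simp
  have qx: "2 * of_int p \<le> 2^(Suc n)*x" "2^(Suc n)*x < 2 * of_int p + 1"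
    using q of_int_floor_le[of "2^(Suc n)*x"] real_of_int_floor_add_one_gt[of "2^(Suc n)*x"] by simp_all
  have A0: "0 < A" "A \<le> 1" using qx unfolding A_def by simp_all
  have pn: "(0::real) < 2^(Suc n)" by simp
  define h where "h = (A + 1/3) / 2^(Suc n)"
  have hx: "2^(Suc n)*(x+h) = 2 * of_int p + 4/3"
    unfolding h_def A_def using pn by (simp add: field_simps)
  have y1: "(2 * of_int p + 1)/2^(Suc n) \<le> x + h" using hx pn by (simp add: field_simps)
  have y2: "x + h \<le> (of_int p + 1)/2^n"
  proof -
    have "2^n*(x+h) = of_int p + 2/3" using hx by simp
    then show ?thesis by (simp add: field_simps)
  qed
  have dec: "2^(Suc n)*(takagi (x+h) - takagi x) = (of_int (wk n x) + 1)*A + (of_int (wk n x) - 1)*(1/3)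
        + takagi (1/3) - takagi (2^(Suc n)*x)"
    using decomp[OF q[unfolded p_def] y1[unfolded p_def] y2[unfolded p_def]] unfolding A_def p_def[symmetric] hx
    by simp
  have hh: "2^(Suc n) * (of_int (U-1) * h) = of_int (U-1) * (A + 1/3)"
    unfolding h_def using pn by (simp add: field_simps)
  have "2^(Suc n)*(takagi (x+h) - takagi x) = 2^(Suc n) * (of_int (U-1) * h)"
    unfolding dec tz takagi_third wn hh by (simp add: field_simps)
  then have eq: "takagi (x+h) - takagi x = of_int (U-1) * h" using pn by simp
  have h0: "0 < h" unfolding h_def using A0 by simp
  have "h \<le> (4/3) / 2^(Suc n)" unfolding h_def using A0 by (intro divide_right_mono) simp_all
  also have "\<dots> < 1/2^n" by (simp add: field_simps)
  also have "\<dots> \<le> 1/2^J" using nn(3) by (intro divide_left_mono power_increasing) simp_all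
  finally have "h < \<delta>" using J by simp
  then show "\<exists>h. 0 < h \<and> h < \<delta> \<and> takagi (x+h) - takagi x = of_int (U-1) * h" using h0 eq by blast
qed



lemma limsup_right:
  fixes f :: "real \<Rightarrow> real"
  assumes ev: "\<exists>\<delta>>0. \<forall>h. 0 < h \<and> h < \<delta> \<longrightarrow> f h \<le> c"
    and fr: "\<forall>\<delta>>0. \<exists>h. 0 < h \<and> h < \<delta> \<and> f h = c"
  shows "Limsup (at_right 0) (\<lambda>h. ereal (f h)) = ereal c"
proof (rule antisym)
  show "Limsup (at_right 0) (\<lambda>h. ereal (f h)) \<le> ereal c"
  proof (rule Limsup_bounded)
    show "\<forall>\<^sub>F h in at_right 0. ereal (f h) \<le> ereal c"
      unfolding eventually_at_right_field using ev by auto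
  qed
  show "ereal c \<le> Limsup (at_right 0) (\<lambda>h. ereal (f h))"
  proof (rule ccontr)
    assume "\<not> ?thesis"
    then have "Limsup (at_right 0) (\<lambda>h. ereal (f h)) < ereal c" by simp
    moreover have "\<forall>y>Limsup (at_right 0) (\<lambda>h. ereal (f h)). eventually (\<lambda>h. y > ereal (f h)) (at_right (0::real))"
      using Limsup_le_iff[where C="Limsup (at_right 0) (\<lambda>h. ereal (f h))" and F="at_right 0" and X="\<lambda>h. ereal (f h)"] by blast
    ultimately have "eventually (\<lambda>h. ereal c > ereal (f h)) (at_right (0::real))" by blast
    then obtain b where b: "b > 0" "\<forall>h>0. h < b \<longrightarrow> f h < c"
      unfolding eventually_at_right_field by auto
    then show False using fr by force
  qed
qed

lemma liminf_left:
  fixes f :: "real \<Rightarrow> real"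
  assumes ev: "\<exists>\<delta>>0. \<forall>h. -\<delta> < h \<and> h < 0 \<longrightarrow> c \<le> f h"
    and fr: "\<forall>\<delta>>0. \<exists>h. -\<delta> < h \<and> h < 0 \<and> f h = c"
  shows "Liminf (at_left 0) (\<lambda>h. ereal (f h)) = ereal c"
proof (rule antisym)
  show "ereal c \<le> Liminf (at_left 0) (\<lambda>h. ereal (f h))"
  proof (rule Liminf_bounded)
    obtain \<delta> where d: "\<delta> > 0" "\<forall>h. -\<delta> < h \<and> h < 0 \<longrightarrow> c \<le> f h" using ev by blast
    show "\<forall>\<^sub>F h in at_left 0. ereal c \<le> ereal (f h)"
      unfolding eventually_at_left_field using d by (intro exI[of _ "-\<delta>"]) auto
  qed
  show "Liminf (at_left 0) (\<lambda>h. ereal (f h)) \<le> ereal c"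
  proof (rule ccontr)
    assume "\<not> ?thesis"
    then have "ereal c < Liminf (at_left 0) (\<lambda>h. ereal (f h))" by simp
    moreover have "\<forall>y<Liminf (at_left 0) (\<lambda>h. ereal (f h)). eventually (\<lambda>h. y < ereal (f h)) (at_left (0::real))"
      using le_Liminf_iff[where C="Liminf (at_left 0) (\<lambda>h. ereal (f h))" and F="at_left 0" and X="\<lambda>h. ereal (f h)"] by blast
    ultimately have "eventually (\<lambda>h. ereal c < ereal (f h)) (at_left (0::real))" by blast
    then obtain b where b: "b < 0" "\<forall>h>b. h < 0 \<longrightarrow> c < f h"
      unfolding eventually_at_left_field by auto
    then show False using fr[rule_format, of "-b"] by force
  qed
qed

lemma int_limsup:
  fixes w :: "nat \<Rightarrow> int"
  assumes fin: "\<bar>limsup (\<lambda>n. ereal (of_int (w n)))\<bar> \<noteq> \<infinity>"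
  shows "\<exists>U. limsup (\<lambda>n. ereal (of_int (w n))) = ereal (of_int U) \<and> (\<exists>N. \<forall>n\<ge>N. w n \<le> U) \<and> (\<forall>N. \<exists>n\<ge>N. w n = U)"
proof -
  define l where "l = limsup (\<lambda>n. ereal (of_int (w n)))"
  obtain r where r: "l = ereal r" using fin unfolding l_def by (cases "limsup (\<lambda>n. ereal (of_int (w n)))") auto
  have ev: "\<exists>N. \<forall>n\<ge>N. real_of_int (w n) < r + e" if "e > 0" for e
  proof -
    have "\<forall>y>l. eventually (\<lambda>n. y > ereal (of_int (w n))) sequentially"
      using Limsup_le_iff[where C=l and F=sequentially and X="\<lambda>n. ereal (of_int (w n))"] unfolding l_def by blast
    moreover have "ereal (r + e) > l" using r that by simp
    ultimately have "eventually (\<lambda>n. ereal (r + e) > ereal (of_int (w n))) sequentially" by blast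
    then show ?thesis unfolding eventually_sequentially by simp
  qed
  have fr: "\<exists>n\<ge>N. r - e < real_of_int (w n)" if "e > 0" for e N
  proof (rule ccontr)
    assume "\<not> ?thesis"
    then have "eventually (\<lambda>n. ereal (of_int (w n)) \<le> ereal (r - e)) sequentially"
      unfolding eventually_sequentially by (auto simp: not_less)
    then have "l \<le> ereal (r - e)" unfolding l_def by (rule Limsup_bounded)
    then show False using r that by simp
  qed
  obtain N1 where N1: "\<forall>n\<ge>N1. real_of_int (w n) < r + 1/2" using ev[of "1/2"] by auto
  obtain n0 where n0: "n0 \<ge> N1" "r - 1/2 < real_of_int (w n0)" using fr[of "1/2" N1] by auto
  define U where "U = w n0"
  have "real_of_int (w n0) < r + 1/2" using N1 n0 by blast
  then have U1: "\<bar>real_of_int U - r\<bar> < 1/2" using n0 unfolding U_def by linarith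
  have rU: "r = real_of_int U"
  proof (rule ccontr)
    assume ne: "r \<noteq> real_of_int U"
    define e where "e = \<bar>real_of_int U - r\<bar>"
    have e0: "e > 0" using ne unfolding e_def by simp
    obtain N2 where N2: "\<forall>n\<ge>N2. real_of_int (w n) < r + e" using ev[OF e0] by auto
    obtain n where n: "n \<ge> max N1 N2" "r - e < real_of_int (w n)" using fr[OF e0, of "max N1 N2"] by auto
    have a: "real_of_int (w n) < r + e" using N2 n by auto
    have "\<bar>real_of_int (w n) - real_of_int U\<bar> < 1" using a n U1 unfolding e_def by linarith
    then have "w n = U" by linarith
    then show False using a n unfolding e_def by linarith
  qed
  have ub: "\<forall>n\<ge>N1. w n \<le> U"
  proof (intro allI impI)
    fix n assume "n \<ge> N1"
    then have "real_of_int (w n) < real_of_int U + 1/2" using N1 rU by auto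
    then have "real_of_int (w n) < real_of_int (U + 1)" by simp
    then show "w n \<le> U" by linarith
  qed
  have fq: "\<forall>N. \<exists>n\<ge>N. w n = U"
  proof
    fix N
    obtain n where n: "n \<ge> max N N1" "r - 1/2 < real_of_int (w n)" using fr[of "1/2" "max N N1"] by auto
    have "w n \<le> U" using ub n by auto
    moreover have "U \<le> w n" using n rU by linarith
    ultimately show "\<exists>n\<ge>N. w n = U" using n by (intro exI[of _ n]) auto
  qed
  show ?thesis using r rU ub fq unfolding l_def by blast
qed



lemma gfun_eq: assumes "i \<ge> 1" shows "gfun i y = phi (2^(i-1) * y) / 2^(i-1)"
  unfolding gfun_def Dset_def using infdist_scaled[of "2^(i-1)" y] by (simp add: phi_eq)

lemma Gfun_eq: "Gfun n = (\<lambda>y. \<Sum>i<n. phi (2^i * y) / 2^i)"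
proof
  fix y
  have "Gfun n y = (\<Sum>i=Suc 0..n. gfun i y)" unfolding Gfun_def by simp
  also have "\<dots> = (\<Sum>i<n. gfun (Suc i) y)" by (rule sum.atLeast1_atMost_eq)
  also have "\<dots> = (\<Sum>i<n. phi (2^i * y) / 2^i)" using gfun_eq by simp
  finally show "Gfun n y = (\<Sum>i<n. phi (2^i * y) / 2^i)" .
qed

lemma deriv_term:
  fixes x :: real
  assumes nz: "2^(Suc i) * x \<notin> \<int>"
  shows "((\<lambda>y. phi (2^i * y) / 2^i) has_real_derivative of_int (eps i x)) (at x)"
proof -
  define k where "k = \<lfloor>2^(Suc i) * x\<rfloor>"
  define S where "S = {y::real. of_int k < 2^(Suc i) * y \<and> 2^(Suc i) * y < of_int k + 1}"
  define g where "g y = (if even k then y - of_int k / 2^(Suc i) else (of_int k + 1) / 2^(Suc i) - y)" for y :: real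
  have oS: "open S" unfolding S_def
    by (intro open_Collect_conj open_Collect_less continuous_intros)
  have "of_int k \<noteq> 2^(Suc i) * x" using nz by (metis Ints_of_int)
  moreover have "of_int k \<le> 2^(Suc i) * x" "2^(Suc i) * x < of_int k + 1" unfolding k_def by linarith+
  ultimately have xS: "x \<in> S" unfolding S_def by auto
  have eq: "g y = phi (2^i * y) / 2^i" if "y \<in> S" for y
  proof -
    have h: "of_int k \<le> 2*(2^i*y)" "2*(2^i*y) \<le> of_int k + 1" using that unfolding S_def by auto
    show ?thesis unfolding g_def phi_half[OF h] by (simp add: field_simps)
  qed
  have e: "eps i x = (if even k then 1 else -1)" unfolding eps_def k_def by simp
  have "(g has_real_derivative of_int (eps i x)) (at x)"
  proof (cases "even k")
    case True
    then show ?thesis unfolding g_def e by (auto intro!: derivative_eq_intros)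
  next
    case False
    then show ?thesis unfolding g_def e by (auto intro!: derivative_eq_intros)
  qed
  then show ?thesis by (rule has_field_derivative_transform_within_open[OF _ oS xS eq])
qed

lemma deriv_Gfun:
  fixes x :: real
  assumes nd: "\<forall>j. 2^j * x \<notin> \<int>"
  shows "deriv (Gfun n) x = of_int (wk n x)"
proof -
  have "((\<lambda>y. \<Sum>i<n. phi (2^i * y) / 2^i) has_real_derivative (\<Sum>i<n. of_int (eps i x))) (at x)"
    by (rule DERIV_sum) (use deriv_term nd in blast)
  then show ?thesis unfolding Gfun_eq wk_def by (simp add: DERIV_imp_deriv)
qed

lemma nd_of:
  fixes x :: real
  assumes "x \<notin> Dall" shows "\<forall>j. 2^j * x \<notin> \<int>"
proof (intro allI notI)
  fix j :: nat assume "2^j * x \<in> \<int>"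
  then obtain k where k: "2^j * x = of_int k" by (auto elim: Ints_cases)
  have "x = of_int k / 2^(Suc j - 1)" using k by (simp add: field_simps)
  then have "x \<in> Dset (Suc j)" unfolding Dset_def by blast
  then show False using assms unfolding Dall_def by auto
qed

lemma eps_minus:
  fixes x :: real
  assumes "2^(Suc i) * x \<notin> \<int>"
  shows "eps i (-x) = - eps i x"
proof -
  define t where "t = 2^(Suc i) * x"
  have "t \<noteq> of_int \<lfloor>t\<rfloor>" using assms unfolding t_def by (metis Ints_of_int)
  then have c: "\<lceil>t\<rceil> = \<lfloor>t\<rfloor> + 1" unfolding ceiling_altdef by simp
  have "\<lfloor>2^(Suc i) * (-x)\<rfloor> = - \<lfloor>t\<rfloor> - 1" unfolding t_def
    using floor_minus[of "2^(Suc i) * x"] c unfolding t_def by simp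
  then show ?thesis unfolding eps_def t_def by simp
qed

lemma wk_minus:
  fixes x :: real
  assumes nd: "\<forall>j. 2^j * x \<notin> \<int>"
  shows "wk n (-x) = - wk n x"
proof -
  have "eps i (-x) = - eps i x" for i using eps_minus nd by blast
  then show ?thesis unfolding wk_def by (simp add: sum_negf)
qed

lemma int_liminf:
  fixes w :: "nat \<Rightarrow> int"
  assumes fin: "\<bar>liminf (\<lambda>n. ereal (of_int (w n)))\<bar> \<noteq> \<infinity>"
  shows "\<exists>L. liminf (\<lambda>n. ereal (of_int (w n))) = ereal (of_int L) \<and> (\<exists>N. \<forall>n\<ge>N. L \<le> w n) \<and> (\<forall>N. \<exists>n\<ge>N. w n = L)"
proof -
  have e: "limsup (\<lambda>n. ereal (of_int (- w n))) = - liminf (\<lambda>n. ereal (of_int (w n)))"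
    using ereal_Limsup_uminus[of sequentially "\<lambda>n. ereal (of_int (w n))"] by simp
  have "\<bar>limsup (\<lambda>n. ereal (of_int (- w n)))\<bar> \<noteq> \<infinity>" unfolding e using fin by simp
  from int_limsup[OF this] obtain U where U: "limsup (\<lambda>n. ereal (of_int (- w n))) = ereal (of_int U)"
    "\<exists>N. \<forall>n\<ge>N. - w n \<le> U" "\<forall>N. \<exists>n\<ge>N. - w n = U" by blast
  have "liminf (\<lambda>n. ereal (of_int (w n))) = ereal (of_int (-U))"
    using U(1) unfolding e by (metis ereal_uminus_uminus of_int_minus uminus_ereal.simps(1))
  moreover have "\<exists>N. \<forall>n\<ge>N. -U \<le> w n" using U(2) by force
  moreover have "\<forall>N. \<exists>n\<ge>N. w n = -U" using U(3) by force
  ultimately show ?thesis by blast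
qed

lemma geom1: "(\<lambda>i. (1/2::real)^(i+1)) sums 1"
proof -
  have "(\<lambda>i. (1/2::real)^i) sums (1 / (1 - 1/2))" by (rule geometric_sums) simp
  from sums_mult[OF this, of "1/2"] show ?thesis by simp
qed

lemma digit:
  fixes x :: real and k :: int and a :: "nat \<Rightarrow> int"
  assumes adig: "\<forall>n\<ge>1. a n \<in> {0, 1}"
    and expn: "(\<lambda>n. of_int (a (n + 1)) / 2 ^ (n + 1)) sums (x - of_int k)"
    and nd: "\<forall>j. 2^j * x \<notin> \<int>"
  shows "a (Suc j) = 0 \<longleftrightarrow> eps j x = 1"
proof -
  define f where "f n = of_int (a (n + 1)) / (2::real) ^ (n + 1)" for n
  define S where "S = (\<Sum>i<Suc j. f i)"
  have ip: "\<exists>c. 2^(Suc m) * (\<Sum>i<Suc m. f i) = of_int (2*c + a (Suc m))" for m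
  proof (induction m)
    case 0
    then show ?case unfolding f_def by (intro exI[of _ 0]) simp
  next
    case (Suc m)
    then obtain c where c: "2^(Suc m) * (\<Sum>i<Suc m. f i) = of_int (2*c + a (Suc m))" by blast
    have "2^(Suc (Suc m)) * (\<Sum>i<Suc (Suc m). f i) = 2 * (2^(Suc m) * (\<Sum>i<Suc m. f i)) + 2^(Suc (Suc m)) * f (Suc m)"
      by (simp add: algebra_simps)
    also have "2^(Suc (Suc m)) * f (Suc m) = of_int (a (Suc (Suc m)))" unfolding f_def by simp
    finally show ?case unfolding c by (intro exI[of _ "2*c + a (Suc m)"]) simp
  qed
  obtain c where c: "2^(Suc j) * S = of_int (2*c + a (Suc j))" using ip unfolding S_def by blast
  have tail: "(\<lambda>i. f (i + Suc j)) sums (x - of_int k - S)"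
    unfolding S_def using sums_split_initial_segment[OF expn[folded f_def]] .
  define \<tau> where "\<tau> = 2^(Suc j) * (x - of_int k - S)"
  have ts: "(\<lambda>i. 2^(Suc j) * f (i + Suc j)) sums \<tau>" unfolding \<tau>_def by (rule sums_mult[OF tail])
  have tf: "2^(Suc j) * f (i + Suc j) = of_int (a (i + Suc j + 1)) * (1/2)^(i+1)" for i
    unfolding f_def by (simp add: power_add field_simps)
  have a01: "of_int (a (i + Suc j + 1)) \<in> {0, 1::real}" for i using adig by force
  have b0: "0 \<le> 2^(Suc j) * f (i + Suc j)" for i using a01[of i] unfolding tf by auto
  have b1: "2^(Suc j) * f (i + Suc j) \<le> (1/2)^(i+1)" for i using a01[of i] unfolding tf by auto
  have t0: "0 \<le> \<tau>" by (rule sums_le[OF b0 sums_zero ts])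
  have t1: "\<tau> \<le> 1" by (rule sums_le[OF b1 ts geom1])
  have xe: "2^(Suc j) * x = of_int (2^(Suc j) * k + 2*c + a (Suc j)) + \<tau>"
    unfolding \<tau>_def using c by (simp add: algebra_simps)
  have "\<tau> \<noteq> 1"
  proof
    assume "\<tau> = 1"
    then have "2^(Suc j) * x = of_int (2^(Suc j) * k + 2*c + a (Suc j) + 1)" using xe by simp
    then show False using nd by (metis Ints_of_int)
  qed
  then have fl: "\<lfloor>2^(Suc j) * x\<rfloor> = 2^(Suc j) * k + 2*c + a (Suc j)"
    using t0 t1 xe by (intro floor_unique) auto
  have "even (2^(Suc j) * k + 2*c + a (Suc j)) \<longleftrightarrow> even (a (Suc j))" by simp
  moreover have "a (Suc j) \<in> {0,1}" using adig by simp
  ultimately show ?thesis unfolding eps_def fl by auto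
qed

lemma walk_good:
  fixes x :: real and L U :: int
  assumes band: "\<forall>n\<ge>N0. L \<le> wk n x \<and> wk n x \<le> U" and gap: "U - L = 1 \<or> U - L = 2"
  shows "\<forall>n\<ge>N0. (wk n x = U - 1 \<or> wk n x = L + 1) \<longrightarrow> (\<forall>i. eps (n+2*i) x + eps (n+2*i+1) x = 0)"
proof (rule allI, rule impI, rule impI)
  have key: "wk (m+2) x = wk m x" if m: "m \<ge> N0" "wk m x = L + 1 \<or> U = L + 1" for m
  proof -
    have w2: "wk (m+2) x = wk m x + eps m x + eps (Suc m) x" using wk_Suc[of "Suc m" x] wk_Suc[of m x] by simp
    have b: "L \<le> wk m x" "wk m x \<le> U" "L \<le> wk (m+2) x" "wk (m+2) x \<le> U" using band m(1) by auto
    show ?thesis using w2 b eps_cases[of m x] eps_cases[of "Suc m" x] m(2) gap by auto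
  qed
  fix n assume n: "n \<ge> N0" "wk n x = U - 1 \<or> wk n x = L + 1"
  have c: "wk n x = L + 1 \<or> U = L + 1" using n(2) gap by auto
  have all: "wk (n+2*i) x = wk n x" for i
  proof (induction i)
    case 0 then show ?case by simp
  next
    case (Suc i)
    have "wk (n+2*i+2) x = wk (n+2*i) x" using key[of "n+2*i"] n(1) c Suc.IH by auto
    then show ?case using Suc.IH by (simp add: add.assoc)
  qed
  show "\<forall>i. eps (n+2*i) x + eps (n+2*i+1) x = 0"
  proof
    fix i
    have "wk (n+2*i+2) x = wk (n+2*i) x + eps (n+2*i) x + eps (n+2*i+1) x"
      using wk_Suc[of "Suc (n+2*i)" x] wk_Suc[of "n+2*i" x] by simp
    moreover have "wk (n+2*(Suc i)) x = wk (n+2*i) x" using all[of i] all[of "Suc i"] by simp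
    ultimately show "eps (n+2*i) x + eps (n+2*i+1) x = 0" by (simp add: add.assoc)
  qed
qed

lemma dini_right:
  fixes x :: real and U :: int
  assumes band: "\<forall>n\<ge>N0. U - 2 \<le> wk n x \<and> wk n x \<le> U"
    and goodH: "\<forall>n\<ge>N0. wk n x = U - 1 \<longrightarrow> (\<forall>i. eps (n+2*i) x + eps (n+2*i+1) x = 0)"
    and freq: "\<forall>N. \<exists>n\<ge>N. wk n x = U"
  shows "dini_upper_right takagi x = ereal (of_int (U - 1))"
  unfolding dini_upper_right_def
proof (rule limsup_right)
  obtain \<delta> where d: "\<delta> > 0" "\<forall>h. 0 < h \<and> h < \<delta> \<longrightarrow> takagi (x+h) - takagi x \<le> of_int (U-1) * h"
    using upper[OF band goodH] by blast
  show "\<exists>\<delta>>0. \<forall>h. 0 < h \<and> h < \<delta> \<longrightarrow> (takagi (x+h) - takagi x) / h \<le> of_int (U - 1)"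
    using d by (intro exI[of _ \<delta>]) (auto simp: pos_divide_le_eq)
  show "\<forall>\<delta>>0. \<exists>h. 0 < h \<and> h < \<delta> \<and> (takagi (x+h) - takagi x) / h = of_int (U - 1)"
    using lower[OF band goodH freq] by force
qed

lemma dini_left:
  fixes x :: real and U :: int
  assumes band: "\<forall>n\<ge>N0. U - 2 \<le> wk n (-x) \<and> wk n (-x) \<le> U"
    and goodH: "\<forall>n\<ge>N0. wk n (-x) = U - 1 \<longrightarrow> (\<forall>i. eps (n+2*i) (-x) + eps (n+2*i+1) (-x) = 0)"
    and freq: "\<forall>N. \<exists>n\<ge>N. wk n (-x) = U"
  shows "dini_lower_left takagi x = ereal (of_int (1 - U))"
  unfolding dini_lower_left_def
proof (rule liminf_left)
  have tm: "takagi (x + h) - takagi x = takagi (-x + (-h)) - takagi (-x)" for h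
    using takagi_minus[of "x+h"] takagi_minus[of x] by simp
  obtain \<delta> where d: "\<delta> > 0" "\<forall>h. 0 < h \<and> h < \<delta> \<longrightarrow> takagi (-x+h) - takagi (-x) \<le> of_int (U-1) * h"
    using upper[OF band goodH] by blast
  show "\<exists>\<delta>>0. \<forall>h. -\<delta> < h \<and> h < 0 \<longrightarrow> of_int (1 - U) \<le> (takagi (x+h) - takagi x) / h"
  proof (intro exI[of _ \<delta>] conjI allI impI)
    fix h :: real assume h: "-\<delta> < h \<and> h < 0"
    then have "takagi (-x + (-h)) - takagi (-x) \<le> of_int (U-1) * (-h)" using d(2)[rule_format, of "-h"] by auto
    then have "takagi (x+h) - takagi x \<le> of_int (1 - U) * h" unfolding tm by (simp add: algebra_simps)
    then show "of_int (1 - U) \<le> (takagi (x+h) - takagi x) / h" using h by (simp add: neg_le_divide_eq)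
  qed (use d in auto)
  show "\<forall>\<delta>>0. \<exists>h. -\<delta> < h \<and> h < 0 \<and> (takagi (x+h) - takagi x) / h = of_int (1 - U)"
  proof (intro allI impI)
    fix \<delta> :: real assume "\<delta> > 0"
    then obtain k where k: "0 < k" "k < \<delta>" "takagi (-x+k) - takagi (-x) = of_int (U-1) * k"
      using lower[OF band goodH freq] by blast
    have "takagi (x + (-k)) - takagi x = of_int (1 - U) * (-k)" using tm[of "-k"] k(3) by (simp add: algebra_simps)
    then have "(takagi (x + (-k)) - takagi x) / (-k) = of_int (1 - U)" using k(1) by simp
    then show "\<exists>h. -\<delta> < h \<and> h < 0 \<and> (takagi (x+h) - takagi x) / h = of_int (1 - U)"
      using k by (intro exI[of _ "-k"]) auto
  qed
qed



theorem proposition2p5: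
  fixes x :: real and k :: int and a :: "nat \<Rightarrow> int"
  assumes xD: "x \<notin> Dall"
    and adig: "\<forall>n\<ge>1. a n \<in> {0, 1}"
    and expn: "(\<lambda>n. of_int (a (n + 1)) / 2 ^ (n + 1)) sums (x - of_int k)"
    and fin_inf: "\<bar>liminf (\<lambda>n. ereal (deriv (Gfun n) x))\<bar> \<noteq> \<infinity>"
    and fin_sup: "\<bar>limsup (\<lambda>n. ereal (deriv (Gfun n) x))\<bar> \<noteq> \<infinity>"
    and gap: "limsup (\<lambda>n. ereal (deriv (Gfun n) x)) - liminf (\<lambda>n. ereal (deriv (Gfun n) x)) \<in> {1, 2}"
  shows "(\<exists>m\<ge>1. \<forall>i. a (m + 2 * i) + a (m + 2 * i + 1) = 1)
    \<and> dini_lower_left takagi x = liminf (\<lambda>n. ereal (deriv (Gfun n) x)) + 1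
    \<and> dini_upper_right takagi x = limsup (\<lambda>n. ereal (deriv (Gfun n) x)) - 1"
proof -
  have nd: "\<forall>j. 2^j * x \<notin> \<int>" using nd_of[OF xD] .
  have seq: "(\<lambda>n. ereal (deriv (Gfun n) x)) = (\<lambda>n. ereal (of_int (wk n x)))"
    using deriv_Gfun[OF nd] by simp
  obtain U where U: "limsup (\<lambda>n. ereal (of_int (wk n x))) = ereal (of_int U)"
      "\<exists>N. \<forall>n\<ge>N. wk n x \<le> U" "\<forall>N. \<exists>n\<ge>N. wk n x = U"
    using int_limsup[of "\<lambda>n. wk n x"] fin_sup unfolding seq by blast
  obtain L where L: "liminf (\<lambda>n. ereal (of_int (wk n x))) = ereal (of_int L)"
      "\<exists>N. \<forall>n\<ge>N. L \<le> wk n x" "\<forall>N. \<exists>n\<ge>N. wk n x = L"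
    using int_liminf[of "\<lambda>n. wk n x"] fin_inf unfolding seq by blast
  obtain N1 where N1: "\<forall>n\<ge>N1. wk n x \<le> U" using U(2) by blast
  obtain N2 where N2: "\<forall>n\<ge>N2. L \<le> wk n x" using L(2) by blast
  define N0 where "N0 = max N1 N2"
  have band: "\<forall>n\<ge>N0. L \<le> wk n x \<and> wk n x \<le> U" using N1 N2 unfolding N0_def by auto
  have gap': "U - L = 1 \<or> U - L = 2"
  proof -
    have "ereal (of_int U) - ereal (of_int L) \<in> {1, 2}" using gap unfolding seq U(1) L(1) .
    then have "real_of_int (U - L) = 1 \<or> real_of_int (U - L) = 2" by (auto simp: one_ereal_def)
    then show ?thesis by linarith
  qed
  have good: "\<forall>n\<ge>N0. (wk n x = U - 1 \<or> wk n x = L + 1) \<longrightarrow> (\<forall>i. eps (n+2*i) x + eps (n+2*i+1) x = 0)"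
    by (rule walk_good[OF band gap'])
  obtain m0 where m0: "m0 \<ge> N0" "\<forall>i. eps (m0+2*i) x + eps (m0+2*i+1) x = 0"
  proof (cases "U - L = 1")
    case True
    have "wk N0 x = U - 1 \<or> wk N0 x = L + 1" using band True by force
    then show ?thesis using that good by blast
  next
    case False
    then have U2: "U = L + 2" using gap' by simp
    obtain n where n: "n \<ge> N0" "wk n x = L" using L(3) by blast
    have "L \<le> wk (Suc n) x" using band n by auto
    then have "eps n x = 1" using wk_Suc[of n x] n eps_cases[of n x] by auto
    then have "wk (Suc n) x = L + 1" using wk_Suc[of n x] n by simp
    then show ?thesis using that good n by (metis le_SucI)
  qed
  have dg: "a (Suc j) = 0 \<longleftrightarrow> eps j x = 1" for j by (rule digit[OF adig expn nd])
  have a01: "a (Suc j) \<in> {0,1}" for j using adig by simp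
  have c1: "\<exists>m\<ge>1. \<forall>i. a (m + 2 * i) + a (m + 2 * i + 1) = 1"
  proof (intro exI[of _ "Suc m0"] conjI allI)
    fix i
    have s: "eps (m0+2*i) x + eps (Suc (m0+2*i)) x = 0" using m0(2) by simp
    have "a (Suc (m0+2*i)) + a (Suc (Suc (m0+2*i))) = 1"
      using s dg[of "m0+2*i"] dg[of "Suc (m0+2*i)"] a01[of "m0+2*i"] a01[of "Suc (m0+2*i)"]
        eps_cases[of "m0+2*i" x] eps_cases[of "Suc (m0+2*i)" x] by auto
    then show "a (Suc m0 + 2 * i) + a (Suc m0 + 2 * i + 1) = 1" by simp
  qed simp
  have r: "dini_upper_right takagi x = ereal (of_int (U - 1))"
  proof (rule dini_right)
    show "\<forall>n\<ge>N0. U - 2 \<le> wk n x \<and> wk n x \<le> U" using band gap' by force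
    show "\<forall>n\<ge>N0. wk n x = U - 1 \<longrightarrow> (\<forall>i. eps (n+2*i) x + eps (n+2*i+1) x = 0)" using good by blast
    show "\<forall>N. \<exists>n\<ge>N. wk n x = U" by (rule U(3))
  qed
  have wm: "wk n (-x) = - wk n x" for n by (rule wk_minus[OF nd])
  have em: "eps i (-x) = - eps i x" for i using eps_minus nd by blast
  have l: "dini_lower_left takagi x = ereal (of_int (1 - (-L)))"
  proof (rule dini_left)
    show "\<forall>n\<ge>N0. - L - 2 \<le> wk n (-x) \<and> wk n (-x) \<le> - L" using band gap' unfolding wm by force
    show "\<forall>n\<ge>N0. wk n (-x) = - L - 1 \<longrightarrow> (\<forall>i. eps (n+2*i) (-x) + eps (n+2*i+1) (-x) = 0)"
    proof (intro allI impI)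
      fix n i assume n: "N0 \<le> n" "wk n (-x) = - L - 1"
      then have "wk n x = L + 1" unfolding wm by simp
      then have "eps (n+2*i) x + eps (n+2*i+1) x = 0" using good n(1) by blast
      then show "eps (n+2*i) (-x) + eps (n+2*i+1) (-x) = 0" unfolding em by simp
    qed
    show "\<forall>N. \<exists>n\<ge>N. wk n (-x) = - L" unfolding wm using L(3) by force
  qed
  have e1: "ereal (real_of_int U) - 1 = ereal (real_of_int U - 1)" by (simp add: one_ereal_def)
  have e2: "ereal (real_of_int L) + 1 = ereal (1 + real_of_int L)" by (simp add: one_ereal_def)
  show ?thesis
    unfolding seq U(1) L(1) using c1 r l e1 e2 by simp
qed

end
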